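(* Let $G$ be a structured quadratic-bilinear system given by $(\mathcal C,\mathcal K,\mathcal B,\mathcal N,\mathcal H)$ with structured generalized transfer functions, and $\widehat G$ the reduced-order system obtained by projection with $V,W\in\mathbb C^{n\times r}$, with reduced generalized transfer functions denoted by hats. Let $\sigma_1,\sigma_2,\sigma_3\in\mathbb C$ be such that $\mathcal C,\mathcal K,\mathcal B,\mathcal N$ can be evaluated at them, $\mathcal H$ at $(\sigma_2,\sigma_1)$, and $\mathcal K(\sigma_1),\mathcal K(\sigma_2),\mathcal K(\sigma_3)$ are invertible. Define $$V_{1,1}=\mathcal K(\sigma_1)^{-1}\mathcal B(\sigma_1),\quad V_{1,2}=\mathcal K(\sigma_2)^{-1}\mathcal B(\sigma_2),\quad V_2=\mathcal K(\sigma_2)^{-1}\mathcal N(\sigma_1)(I_m\otimes V_{1,1}),$$ $$V_{3,1}=\mathcal K(\sigma_3)^{-1}\mathcal N(\sigma_2)(I_m\otimes V_2),\quad V_{3,2}=\mathcal K(\sigma_3)^{-1}\mathcal H(\sigma_2,\sigma_1)(V_{1,2}\otimes V_{1,1}).$$ Suppose $V$ has full column rank with $\operatorname{span}(V)\supseteq\operatorname{span}([V_{1,1}\ V_{1,2}\ V_2\ V_{3,1}\ V_{3,2}])$, and $W$ is an arbitrary full-rank matrix of the same size with $W^{\mathsf H}\mathcal K(\sigma_i)V$ invertible for $i=1,2,3$. Then $$G_1^{(B)}(\sigma_1)=\widehat G_1^{(B)}(\sigma_1),\quad G_1^{(B)}(\sigma_2)=\widehat G_1^{(B)}(\sigma_2),\quad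 G_2^{(N,(B))}(\sigma_1,\sigma_2)=\widehat G_2^{(N,(B))}(\sigma_1,\sigma_2),$$ $$G_3^{(N,(N,(B)))}(\sigma_1,\sigma_2,\sigma_3)=\widehat G_3^{(N,(N,(B)))}(\sigma_1,\sigma_2,\sigma_3),\quad G_3^{(H,(B),(B))}(\sigma_1,\sigma_2,\sigma_3)=\widehat G_3^{(H,(B),(B))}(\sigma_1,\sigma_2,\sigma_3).$$
   Context: A structured quadratic-bilinear system (in frequency domain) with $n$ states, $m$ inputs and $p$ outputs is given by matrix-valued functions $\mathcal C:\mathbb C\to\mathbb C^{p\times n}$, $\mathcal K:\mathbb C\to\mathbb C^{n\times n}$, $\mathcal B:\mathbb C\to\mathbb C^{n\times m}$, $\mathcal N:\mathbb C\to\mathbb C^{n\times nm}$ with $\mathcal N(s)=[\mathcal N_1(s)\ \cdots\ \mathcal N_m(s)]$, $\mathcal N_j(s)\in\mathbb C^{n\times n}$, and $\mathcal H:\mathbb C\times\mathbb C\to\mathbb C^{n\times n^2}$. Its structured generalized transfer functions are $G_1^{(B)}(s_1)=\mathcal C(s_1)\mathcal K(s_1)^{-1}\mathcal B(s_1)$, $G_2^{(N,(B))}(s_1,s_2)=\mathcal C(s_2)\mathcal K(s_2)^{-1}\mathcal N(s_1)\big(I_m\otimes\mathcal K(s_1)^{-1}\mathcal B(s_1)\big)$, $G_3^{(N,(N,(B)))}(s_1,s_2,s_3)=\mathcal C(s_3)\mathcal K(s_3)^{-1}\mathcal N(s_2)\Big(I_m\otimes\mathcal K(s_2)^{-1}\mathcal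 N(s_1)\big(I_m\otimes\mathcal K(s_1)^{-1}\mathcal B(s_1)\big)\Big)$, $G_3^{(H,(B),(B))}(s_1,s_2,s_3)=\mathcal C(s_3)\mathcal K(s_3)^{-1}\mathcal H(s_2,s_1)\big(\mathcal K(s_2)^{-1}\mathcal B(s_2)\otimes\mathcal K(s_1)^{-1}\mathcal B(s_1)\big)$, wherever the inverses exist; $\otimes$ is the Kronecker product. The reduced-order system obtained by projection with $V,W\in\mathbb C^{n\times r}$ is given by $\widehat{\mathcal C}(s)=\mathcal C(s)V$, $\widehat{\mathcal K}(s)=W^{\mathsf H}\mathcal K(s)V$, $\widehat{\mathcal B}(s)=W^{\mathsf H}\mathcal B(s)$, $\widehat{\mathcal N}(s)=W^{\mathsf H}\mathcal N(s)(I_m\otimes V)$, $\widehat{\mathcal H}(s_1,s_2)=W^{\mathsf H}\mathcal H(s_1,s_2)(V\otimes V)$, where $W^{\mathsf H}$ is the conjugate transpose; its generalized transfer functions $\widehat G$ are defined by the same formulas with hatted functions. *)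

theory Defs
  imports "Jordan_Normal_Form.Schur_Decomposition" "Jordan_Normal_Form.DL_Rank"
begin

definition kron :: "'a :: times mat \<Rightarrow> 'a mat \<Rightarrow> 'a mat" where
  "kron A B = mat (dim_row A * dim_row B) (dim_col A * dim_col B)
     (\<lambda>(i,j). A $$ (i div dim_row B, j div dim_col B) * B $$ (i mod dim_row B, j mod dim_col B))"

text \<open>Matrix inverse (meaningful for invertible matrices).\<close>
definition minv :: "'a :: semiring_1 mat \<Rightarrow> 'a mat" where
  "minv A = (SOME B. inverts_mat A B \<and> inverts_mat B A)"

definition hcat :: "'a :: zero mat \<Rightarrow> 'a mat \<Rightarrow> 'a mat" where
  "hcat A B = mat (dim_row A) (dim_col A + dim_col B)
     (\<lambda>(i,j). if j < dim_col A then A $$ (i,j) else B $$ (i, j - dim_col A))"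

definition colspan :: "'a :: semiring_0 mat \<Rightarrow> 'a vec set" where
  "colspan A = {A *\<^sub>v x | x. x \<in> carrier_vec (dim_col A)}"

type_synonym cfun = "complex \<Rightarrow> complex mat"

definition G1 :: "cfun \<Rightarrow> cfun \<Rightarrow> cfun \<Rightarrow> complex \<Rightarrow> complex mat" where
  "G1 C K B s1 = C s1 * minv (K s1) * B s1"

definition G2 :: "nat \<Rightarrow> cfun \<Rightarrow> cfun \<Rightarrow> cfun \<Rightarrow> cfun \<Rightarrow> complex \<Rightarrow> complex \<Rightarrow> complex mat" where
  "G2 m C K B N s1 s2 = C s2 * minv (K s2) * N s1 * kron (1\<^sub>m m) (minv (K s1) * B s1)"

definition G3N :: "nat \<Rightarrow> cfun \<Rightarrow> cfun \<Rightarrow> cfun \<Rightarrow> cfun \<Rightarrow> complex \<Rightarrow> complex \<Rightarrow> complex \<Rightarrow> complex mat" where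
  "G3N m C K B N s1 s2 s3 = C s3 * minv (K s3) * N s2 *
      kron (1\<^sub>m m) (minv (K s2) * N s1 * kron (1\<^sub>m m) (minv (K s1) * B s1))"

definition G3H :: "cfun \<Rightarrow> cfun \<Rightarrow> cfun \<Rightarrow> (complex \<Rightarrow> complex \<Rightarrow> complex mat) \<Rightarrow> complex \<Rightarrow> complex \<Rightarrow> complex \<Rightarrow> complex mat" where
  "G3H C K B H s1 s2 s3 = C s3 * minv (K s3) * H s2 s1 *
      kron (minv (K s2) * B s2) (minv (K s1) * B s1)"

definition redC :: "cfun \<Rightarrow> complex mat \<Rightarrow> cfun" where
  "redC C V = (\<lambda>s. C s * V)"
definition redK :: "cfun \<Rightarrow> complex mat \<Rightarrow> complex mat \<Rightarrow> cfun" where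
  "redK K V W = (\<lambda>s. mat_adjoint W * K s * V)"
definition redB :: "cfun \<Rightarrow> complex mat \<Rightarrow> cfun" where
  "redB B W = (\<lambda>s. mat_adjoint W * B s)"
definition redN :: "nat \<Rightarrow> cfun \<Rightarrow> complex mat \<Rightarrow> complex mat \<Rightarrow> cfun" where
  "redN m N V W = (\<lambda>s. mat_adjoint W * N s * kron (1\<^sub>m m) V)"
definition redH :: "(complex \<Rightarrow> complex \<Rightarrow> complex mat) \<Rightarrow> complex mat \<Rightarrow> complex mat
      \<Rightarrow> complex \<Rightarrow> complex \<Rightarrow> complex mat" where
  "redH H V W = (\<lambda>s1 s2. mat_adjoint W * H s1 s2 * kron V V)"

end

theory Submission imports Defs begin

lemma adj_carrier: "W \<in> carrier_mat n r \<Longrightarrow> mat_adjoint W \<in> carrier_mat r n"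
  unfolding mat_adjoint_def by (auto simp: mat_of_rows_def)

lemma minv_props:
  assumes "invertible_mat A" "A \<in> carrier_mat n n"
  shows "minv A \<in> carrier_mat n n" "A * minv A = 1\<^sub>m n" "minv A * A = 1\<^sub>m n"
proof -
  have ex: "\<exists>B. inverts_mat A B \<and> inverts_mat B A" using assms(1) unfolding invertible_mat_def by blast
  have h: "inverts_mat A (minv A) \<and> inverts_mat (minv A) A"
    unfolding minv_def by (rule someI_ex[OF ex])
  hence 1: "A * minv A = 1\<^sub>m n" and 2: "minv A * A = 1\<^sub>m (dim_row (minv A))"
    using assms(2) unfolding inverts_mat_def by auto
  have "dim_col (minv A) = n" using arg_cong[OF 1, of dim_col] by simp
  moreover have "dim_row (minv A) = n" using arg_cong[OF 2, of dim_col] assms(2) by simp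
  ultimately show c: "minv A \<in> carrier_mat n n" by auto
  show "A * minv A = 1\<^sub>m n" by fact
  show "minv A * A = 1\<^sub>m n" using 2 c by simp
qed

lemma sum_split_add: "(\<Sum>j<a+b. f j) = (\<Sum>j<a. f j) + (\<Sum>j<b. f (a+j))" for f :: "nat \<Rightarrow> 'a::comm_monoid_add"
  by (induction b) (auto simp: add.assoc)

lemma sum_div_mod:
  "(\<Sum>k<a*b. f (k div b) (k mod b)) = (\<Sum>i<a. \<Sum>j<b. f i j)" for b :: nat
proof (induction a)
  case 0 then show ?case by simp
next
  case (Suc a)
  have "(\<Sum>k<Suc a*b. f (k div b) (k mod b)) = (\<Sum>k<a*b + b. f (k div b) (k mod b))"
    by (simp add: add.commute)
  also have "\<dots> = (\<Sum>k<a*b. f (k div b) (k mod b)) + (\<Sum>j<b. f ((a*b+j) div b) ((a*b+j) mod b))"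
    by (rule sum_split_add)
  also have "(\<Sum>j<b. f ((a*b+j) div b) ((a*b+j) mod b)) = (\<Sum>j<b. f a j)"
  proof (rule sum.cong)
    fix j assume "j \<in> {..<b}"
    then have j: "j < b" by simp
    have "(a*b+j) div b = a" using j by simp
    moreover have "(a*b+j) mod b = j" using j by simp
    ultimately show "f ((a*b+j) div b) ((a*b+j) mod b) = f a j" by simp
  qed simp
  finally show ?case using Suc by simp
qed

lemma kron_carrier: "kron A B \<in> carrier_mat (dim_row A * dim_row B) (dim_col A * dim_col B)"
  unfolding kron_def by auto

lemma kron_mult:
  fixes A B C D :: "'a :: comm_semiring_1 mat"
  assumes A: "A \<in> carrier_mat ra ca" and B: "B \<in> carrier_mat rb cb"
    and C: "C \<in> carrier_mat ca cc" and D: "D \<in> carrier_mat cb cd"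
  shows "kron A B * kron C D = kron (A * C) (B * D)"
proof (rule eq_matI)
  show "dim_row (kron A B * kron C D) = dim_row (kron (A * C) (B * D))"
    using A B C D by (simp add: kron_def)
  show "dim_col (kron A B * kron C D) = dim_col (kron (A * C) (B * D))"
    using A B C D by (simp add: kron_def)
  fix i j assume i: "i < dim_row (kron (A * C) (B * D))" and j: "j < dim_col (kron (A * C) (B * D))"
  have i': "i < ra * rb" and j': "j < cc * cd" using i j A B C D by (auto simp: kron_def)
  have rb: "rb > 0" using i' by (cases rb) auto
  have cd: "cd > 0" using j' by (cases cd) auto
  have idiv: "i div rb < ra" using i' by (simp add: less_mult_imp_div_less)
  have jdiv: "j div cd < cc" using j' by (simp add: less_mult_imp_div_less)
  have imod: "i mod rb < rb" using rb by simp
  have jmod: "j mod cd < cd" using cd by simp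
  have "(kron A B * kron C D) $$ (i,j) = (\<Sum>k<ca*cb. (A $$ (i div rb, k div cb) * B $$ (i mod rb, k mod cb))
       * (C $$ (k div cb, j div cd) * D $$ (k mod cb, j mod cd)))"
    using A B C D i' j' unfolding kron_def times_mat_def scalar_prod_def
    by (auto intro!: sum.cong simp: lessThan_atLeast0 less_mult_imp_div_less)
  also have "\<dots> = (\<Sum>a<ca. \<Sum>b<cb. (A $$ (i div rb, a) * B $$ (i mod rb, b))
       * (C $$ (a, j div cd) * D $$ (b, j mod cd)))"
    by (rule sum_div_mod)
  also have "\<dots> = (\<Sum>a<ca. A $$ (i div rb, a) * C $$ (a, j div cd)) * (\<Sum>b<cb. B $$ (i mod rb, b) * D $$ (b, j mod cd))"
    by (simp add: sum_product sum_distrib_left sum_distrib_right mult_ac sum.swap[where A="{..<cb}"])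
  also have "\<dots> = kron (A * C) (B * D) $$ (i,j)"
    using A B C D i' j' idiv jdiv imod jmod unfolding kron_def
    by (simp add: scalar_prod_def lessThan_atLeast0)
  finally show "(kron A B * kron C D) $$ (i,j) = kron (A * C) (B * D) $$ (i,j)" .
qed

lemma colspan_hcat1:
  fixes X Z :: "'a :: comm_ring_1 mat"
  assumes "dim_row Z = dim_row X"
  shows "colspan X \<subseteq> colspan (hcat X Z)"
proof
  fix v assume "v \<in> colspan X"
  then obtain x where x: "x \<in> carrier_vec (dim_col X)" "v = X *\<^sub>v x" unfolding colspan_def by auto
  define y where "y = vec (dim_col X + dim_col Z) (\<lambda>i. if i < dim_col X then x $ i else 0)"
  have "hcat X Z *\<^sub>v y = X *\<^sub>v x"
  proof (rule eq_vecI)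
    fix i assume "i < dim_vec (X *\<^sub>v x)"
    then have i: "i < dim_row X" by simp
    have "(hcat X Z *\<^sub>v y) $ i = (\<Sum>j<dim_col X + dim_col Z. hcat X Z $$ (i,j) * y $ j)"
      using i unfolding mult_mat_vec_def scalar_prod_def
      by (simp add: hcat_def y_def atLeast0LessThan)
    also have "\<dots> = (\<Sum>j<dim_col X. hcat X Z $$ (i,j) * y $ j) + (\<Sum>j<dim_col Z. hcat X Z $$ (i,dim_col X + j) * y $ (dim_col X + j))"
      by (rule sum_split_add)
    also have "\<dots> = (\<Sum>j<dim_col X. X $$ (i,j) * x $ j)"
      using i by (simp add: hcat_def y_def)
    also have "\<dots> = (X *\<^sub>v x) $ i"
      using i x unfolding mult_mat_vec_def scalar_prod_def by (simp add: atLeast0LessThan)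
    finally show "(hcat X Z *\<^sub>v y) $ i = (X *\<^sub>v x) $ i" .
  qed (simp add: hcat_def)
  moreover have "y \<in> carrier_vec (dim_col (hcat X Z))" unfolding y_def hcat_def by simp
  ultimately have "v = hcat X Z *\<^sub>v y \<and> y \<in> carrier_vec (dim_col (hcat X Z))" using x(2) by simp
  then show "v \<in> colspan (hcat X Z)" unfolding colspan_def by blast
qed

lemma colspan_hcat2:
  fixes X Z :: "'a :: comm_ring_1 mat"
  assumes "dim_row Z = dim_row X"
  shows "colspan Z \<subseteq> colspan (hcat X Z)"
proof
  fix v assume "v \<in> colspan Z"
  then obtain x where x: "x \<in> carrier_vec (dim_col Z)" "v = Z *\<^sub>v x" unfolding colspan_def by auto
  define y where "y = vec (dim_col X + dim_col Z) (\<lambda>i. if i < dim_col X then 0 else x $ (i - dim_col X))"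
  have "hcat X Z *\<^sub>v y = Z *\<^sub>v x"
  proof (rule eq_vecI)
    fix i assume "i < dim_vec (Z *\<^sub>v x)"
    then have i: "i < dim_row X" using assms by simp
    have "(hcat X Z *\<^sub>v y) $ i = (\<Sum>j<dim_col X + dim_col Z. hcat X Z $$ (i,j) * y $ j)"
      using i unfolding mult_mat_vec_def scalar_prod_def
      by (simp add: hcat_def y_def atLeast0LessThan)
    also have "\<dots> = (\<Sum>j<dim_col X. hcat X Z $$ (i,j) * y $ j) + (\<Sum>j<dim_col Z. hcat X Z $$ (i,dim_col X + j) * y $ (dim_col X + j))"
      by (rule sum_split_add)
    also have "\<dots> = (\<Sum>j<dim_col Z. Z $$ (i,j) * x $ j)"
      using i by (simp add: hcat_def y_def)
    also have "\<dots> = (Z *\<^sub>v x) $ i"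
      using i x assms unfolding mult_mat_vec_def scalar_prod_def by (simp add: atLeast0LessThan)
    finally show "(hcat X Z *\<^sub>v y) $ i = (Z *\<^sub>v x) $ i" .
  qed (simp add: hcat_def assms)
  moreover have "y \<in> carrier_vec (dim_col (hcat X Z))" unfolding y_def hcat_def by simp
  ultimately have "v = hcat X Z *\<^sub>v y \<and> y \<in> carrier_vec (dim_col (hcat X Z))" using x(2) by simp
  then show "v \<in> colspan (hcat X Z)" unfolding colspan_def by blast
qed

lemma colspan_factor:
  fixes X V :: "'a :: comm_ring_1 mat"
  assumes X: "X \<in> carrier_mat n c" and V: "V \<in> carrier_mat n r" and sub: "colspan X \<subseteq> colspan V"
  shows "\<exists>Y \<in> carrier_mat r c. X = V * Y"
proof -
  have "\<forall>j<c. \<exists>y. y \<in> carrier_vec r \<and> col X j = V *\<^sub>v y"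
  proof (intro allI impI)
    fix j assume j: "j < c"
    have "col X j = X *\<^sub>v unit_vec c j" using X j by (intro eq_vecI) auto
    moreover have "unit_vec c j \<in> carrier_vec (dim_col X)" using X by simp
    ultimately have "col X j \<in> colspan X" unfolding colspan_def by blast
    with sub show "\<exists>y. y \<in> carrier_vec r \<and> col X j = V *\<^sub>v y" using V unfolding colspan_def by auto
  qed
  then obtain g where g: "\<And>j. j < c \<Longrightarrow> g j \<in> carrier_vec r \<and> col X j = V *\<^sub>v g j" by metis
  define Y where "Y = mat r c (\<lambda>(i,j). g j $ i)"
  have "X = V * Y"
  proof (rule eq_matI)
    fix i j assume i: "i < dim_row (V * Y)" and j: "j < dim_col (V * Y)"
    have jc: "j < c" using j unfolding Y_def by simp
    have gc: "g j \<in> carrier_vec r" using g[OF jc] by simp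
    have cj: "col Y j = g j" unfolding Y_def using jc gc by (intro eq_vecI) auto
    have "X $$ (i,j) = col X j $ i" using i j X V by (simp add: Y_def)
    also have "\<dots> = (V *\<^sub>v g j) $ i" using g j by (simp add: Y_def)
    also have "\<dots> = row V i \<bullet> col Y j" using i cj by simp
    also have "\<dots> = (V * Y) $$ (i,j)" using i j by simp
    finally show "X $$ (i,j) = (V*Y) $$ (i,j)" .
  qed (use X V in \<open>auto simp: Y_def\<close>)
  moreover have "Y \<in> carrier_mat r c" unfolding Y_def by simp
  ultimately show ?thesis by blast
qed

lemma pat:
  fixes C V Wh K N Q P Y :: "complex mat"
  assumes C: "C \<in> carrier_mat p n" and V: "V \<in> carrier_mat n r" and Wh: "Wh \<in> carrier_mat r n"
    and K: "K \<in> carrier_mat n n" and iK: "invertible_mat K" and iKr: "invertible_mat (Wh * K * V)"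
    and N: "N \<in> carrier_mat n q" and Q: "Q \<in> carrier_mat q t" and P: "P \<in> carrier_mat t c"
    and Y: "Y \<in> carrier_mat r c" and eq: "minv K * N * (Q * P) = V * Y"
  shows "minv (Wh * K * V) * (Wh * N * Q) * P = Y"
    and "(C * V) * minv (Wh * K * V) * (Wh * N * Q) * P = C * minv K * N * (Q * P)"
proof -
  define Kr where "Kr = Wh * K * V"
  have Kr: "Kr \<in> carrier_mat r r" using Wh K V unfolding Kr_def by auto
  note mK = minv_props[OF iK K] and mKr = minv_props[OF iKr[folded Kr_def] Kr]
  have QP: "Q * P \<in> carrier_mat q c" using Q P by auto
  define R where "R = N * (Q * P)"
  have R: "R \<in> carrier_mat n c" using N QP unfolding R_def by auto
  have e1: "minv K * R = V * Y" using eq assoc_mult_mat[OF mK(1) N QP] unfolding R_def by simp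
  have "R = K * (minv K * R)" using mK R K by (simp add: assoc_mult_mat[symmetric, of K n n "minv K" n R c])
  hence RK: "R = K * (V * Y)" using e1 by simp
  have WN: "Wh * N \<in> carrier_mat r q" using Wh N by auto
  have WK: "Wh * K \<in> carrier_mat r n" using Wh K by auto
  have VY: "V * Y \<in> carrier_mat n c" using V Y by auto
  have "(Wh * N * Q) * P = (Wh * N) * (Q * P)" by (rule assoc_mult_mat[OF WN Q P])
  also have "\<dots> = Wh * R" unfolding R_def by (rule assoc_mult_mat[OF Wh N QP])
  also have "\<dots> = Wh * (K * (V * Y))" using RK by simp
  also have "\<dots> = (Wh * K) * (V * Y)" by (rule assoc_mult_mat[OF Wh K VY, symmetric])
  also have "\<dots> = Kr * Y" unfolding Kr_def by (rule assoc_mult_mat[OF WK V Y, symmetric])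
  finally have WNQP: "(Wh * N * Q) * P = Kr * Y" .
  have WNQ: "Wh * N * Q \<in> carrier_mat r t" using WN Q by auto
  have a: "minv Kr * (Wh * N * Q) * P = Y"
  proof -
    have "minv Kr * (Wh * N * Q) * P = minv Kr * ((Wh * N * Q) * P)"
      using mKr(1) WNQ P by (rule assoc_mult_mat)
    also have "\<dots> = minv Kr * (Kr * Y)" using WNQP by simp
    also have "\<dots> = (minv Kr * Kr) * Y" using assoc_mult_mat[OF mKr(1) Kr Y] by simp
    also have "\<dots> = Y" using mKr(3) Y by simp
    finally show ?thesis .
  qed
  then show "minv (Wh * K * V) * (Wh * N * Q) * P = Y" unfolding Kr_def .
  have CV: "C * V \<in> carrier_mat p r" using C V by auto
  have CVm: "C * V * minv Kr \<in> carrier_mat p r" using CV mKr(1) by auto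
  have mW: "minv Kr * (Wh * N * Q) \<in> carrier_mat r t" using mKr(1) WNQ by auto
  have WNQP': "Wh * N * Q * P \<in> carrier_mat r c" using WNQ P by auto
  have "(C * V) * minv Kr * (Wh * N * Q) * P = (C * V * minv Kr) * ((Wh * N * Q) * P)"
    by (rule assoc_mult_mat[OF CVm WNQ P])
  also have "\<dots> = (C * V) * (minv Kr * ((Wh * N * Q) * P))"
    by (rule assoc_mult_mat[OF CV mKr(1) WNQP'])
  also have "minv Kr * ((Wh * N * Q) * P) = minv Kr * (Wh * N * Q) * P"
    by (rule assoc_mult_mat[OF mKr(1) WNQ P, symmetric])
  also have "(C * V) * \<dots> = C * (V * Y)" using a assoc_mult_mat[OF C V Y] by simp
  also have "\<dots> = C * (minv K * R)" using e1 by simp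
  also have "\<dots> = (C * minv K) * R" by (rule assoc_mult_mat[OF C mK(1) R, symmetric])
  also have "\<dots> = C * minv K * N * (Q * P)" unfolding R_def
    using C mK(1) by (intro assoc_mult_mat[OF _ N QP, symmetric]) auto
  finally show "(C * V) * minv (Wh * K * V) * (Wh * N * Q) * P = C * minv K * N * (Q * P)"
    unfolding Kr_def .
qed

theorem proposition4p4:
  fixes n m p r :: nat
    and C K B N :: "complex \<Rightarrow> complex mat"
    and H :: "complex \<Rightarrow> complex \<Rightarrow> complex mat"
    and V W :: "complex mat"
    and \<sigma>1 \<sigma>2 \<sigma>3 :: complex
  assumes dimC: "\<And>s. s \<in> {\<sigma>1, \<sigma>2, \<sigma>3} \<Longrightarrow> C s \<in> carrier_mat p n"
    and dimK: "\<And>s. s \<in> {\<sigma>1, \<sigma>2, \<sigma>3} \<Longrightarrow> K s \<in> carrier_mat n n"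
    and dimB: "\<And>s. s \<in> {\<sigma>1, \<sigma>2, \<sigma>3} \<Longrightarrow> B s \<in> carrier_mat n m"
    and dimN: "\<And>s. s \<in> {\<sigma>1, \<sigma>2, \<sigma>3} \<Longrightarrow> N s \<in> carrier_mat n (n * m)"
    and dimH: "H \<sigma>2 \<sigma>1 \<in> carrier_mat n (n * n)"
    and invK: "\<And>s. s \<in> {\<sigma>1, \<sigma>2, \<sigma>3} \<Longrightarrow> invertible_mat (K s)"
    and dimV: "V \<in> carrier_mat n r"
    and dimW: "W \<in> carrier_mat n r"
    and rankV: "vec_space.rank n V = r"
    and rankW: "vec_space.rank n W = r"
    and invKr: "\<And>s. s \<in> {\<sigma>1, \<sigma>2, \<sigma>3} \<Longrightarrow> invertible_mat (mat_adjoint W * K s * V)"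
    and span: "let V11 = minv (K \<sigma>1) * B \<sigma>1;
                   V12 = minv (K \<sigma>2) * B \<sigma>2;
                   V2 = minv (K \<sigma>2) * N \<sigma>1 * kron (1\<^sub>m m) V11;
                   V31 = minv (K \<sigma>3) * N \<sigma>2 * kron (1\<^sub>m m) V2;
                   V32 = minv (K \<sigma>3) * H \<sigma>2 \<sigma>1 * kron V12 V11
               in colspan (hcat V11 (hcat V12 (hcat V2 (hcat V31 V32)))) \<subseteq> colspan V"
  shows "G1 C K B \<sigma>1 = G1 (redC C V) (redK K V W) (redB B W) \<sigma>1
       \<and> G1 C K B \<sigma>2 = G1 (redC C V) (redK K V W) (redB B W) \<sigma>2
       \<and> G2 m C K B N \<sigma>1 \<sigma>2 = G2 m (redC C V) (redK K V W) (redB B W) (redN m N V W) \<sigma>1 \<sigma>2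
       \<and> G3N m C K B N \<sigma>1 \<sigma>2 \<sigma>3
           = G3N m (redC C V) (redK K V W) (redB B W) (redN m N V W) \<sigma>1 \<sigma>2 \<sigma>3
       \<and> G3H C K B H \<sigma>1 \<sigma>2 \<sigma>3
           = G3H (redC C V) (redK K V W) (redB B W) (redH H V W) \<sigma>1 \<sigma>2 \<sigma>3"
proof -
  define Wh where "Wh = mat_adjoint W"
  have Wh: "Wh \<in> carrier_mat r n" unfolding Wh_def by (rule adj_carrier[OF dimW])
  have s1: "\<sigma>1 \<in> {\<sigma>1, \<sigma>2, \<sigma>3}" and s2: "\<sigma>2 \<in> {\<sigma>1, \<sigma>2, \<sigma>3}" and s3: "\<sigma>3 \<in> {\<sigma>1, \<sigma>2, \<sigma>3}" by auto
  note K1 = dimK[OF s1] and K2 = dimK[OF s2] and K3 = dimK[OF s3]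
  note mK1 = minv_props[OF invK[OF s1] K1] and mK2 = minv_props[OF invK[OF s2] K2]
    and mK3 = minv_props[OF invK[OF s3] K3]
  have N1: "N \<sigma>1 \<in> carrier_mat n (m*n)" using dimN[OF s1] by (simp add: mult.commute)
  have N2: "N \<sigma>2 \<in> carrier_mat n (m*n)" using dimN[OF s2] by (simp add: mult.commute)
  have I: "1\<^sub>m m \<in> carrier_mat m m" by simp
  define V11 where "V11 = minv (K \<sigma>1) * B \<sigma>1"
  define V12 where "V12 = minv (K \<sigma>2) * B \<sigma>2"
  define V2 where "V2 = minv (K \<sigma>2) * N \<sigma>1 * kron (1\<^sub>m m) V11"
  define V31 where "V31 = minv (K \<sigma>3) * N \<sigma>2 * kron (1\<^sub>m m) V2"
  define V32 where "V32 = minv (K \<sigma>3) * H \<sigma>2 \<sigma>1 * kron V12 V11"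
  have cV11: "V11 \<in> carrier_mat n m" unfolding V11_def using mK1 dimB[OF s1] by auto
  have cV12: "V12 \<in> carrier_mat n m" unfolding V12_def using mK2 dimB[OF s2] by auto
  have kV11: "kron (1\<^sub>m m) V11 \<in> carrier_mat (m*n) (m*m)" using kron_carrier[of "1\<^sub>m m" V11] cV11 by simp
  have cV2: "V2 \<in> carrier_mat n (m*m)" unfolding V2_def using mK2 N1 kV11 by auto
  have kV2: "kron (1\<^sub>m m) V2 \<in> carrier_mat (m*n) (m*(m*m))" using kron_carrier[of "1\<^sub>m m" V2] cV2 by simp
  have cV31: "V31 \<in> carrier_mat n (m*(m*m))" unfolding V31_def using mK3 N2 kV2 by auto
  have kV1211: "kron V12 V11 \<in> carrier_mat (n*n) (m*m)" using kron_carrier[of V12 V11] cV11 cV12 by simp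
  have cV32: "V32 \<in> carrier_mat n (m*m)" unfolding V32_def using mK3 dimH kV1211 by auto
  have sp: "colspan (hcat V11 (hcat V12 (hcat V2 (hcat V31 V32)))) \<subseteq> colspan V"
    using span unfolding Let_def V11_def[symmetric] V12_def[symmetric] V2_def[symmetric]
      V31_def[symmetric] V32_def[symmetric] .
  have r4: "dim_row (hcat V31 V32) = n" using cV31 by (simp add: hcat_def)
  have r3: "dim_row (hcat V2 (hcat V31 V32)) = n" using cV2 by (simp add: hcat_def)
  have r2: "dim_row (hcat V12 (hcat V2 (hcat V31 V32))) = n" using cV12 by (simp add: hcat_def)
  define R4 where "R4 = hcat V31 V32"
  define R3 where "R3 = hcat V2 R4"
  define R2 where "R2 = hcat V12 R3"
  have sp': "colspan (hcat V11 R2) \<subseteq> colspan V" using sp unfolding R2_def R3_def R4_def .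
  have d2: "dim_row R2 = dim_row V11" using r2 cV11 unfolding R2_def R3_def R4_def by simp
  have d3: "dim_row R3 = dim_row V12" using r3 cV12 unfolding R3_def R4_def by simp
  have d4: "dim_row R4 = dim_row V2" using r4 cV2 unfolding R4_def by simp
  have d5: "dim_row V32 = dim_row V31" using cV31 cV32 by simp
  have sp11: "colspan V11 \<subseteq> colspan V" using order_trans[OF colspan_hcat1[OF d2] sp'] .
  have spR2: "colspan R2 \<subseteq> colspan V" using order_trans[OF colspan_hcat2[OF d2] sp'] .
  have sp12: "colspan V12 \<subseteq> colspan V" using order_trans[OF colspan_hcat1[OF d3] spR2[unfolded R2_def]] .
  have spR3: "colspan R3 \<subseteq> colspan V" using order_trans[OF colspan_hcat2[OF d3] spR2[unfolded R2_def]] .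
  have sp2: "colspan V2 \<subseteq> colspan V" using order_trans[OF colspan_hcat1[OF d4] spR3[unfolded R3_def]] .
  have spR4: "colspan R4 \<subseteq> colspan V" using order_trans[OF colspan_hcat2[OF d4] spR3[unfolded R3_def]] .
  have sp31: "colspan V31 \<subseteq> colspan V" using order_trans[OF colspan_hcat1[OF d5] spR4[unfolded R4_def]] .
  have sp32: "colspan V32 \<subseteq> colspan V" using order_trans[OF colspan_hcat2[OF d5] spR4[unfolded R4_def]] .
  obtain Y11 where Y11: "Y11 \<in> carrier_mat r m" "V11 = V * Y11" using colspan_factor[OF cV11 dimV sp11] by blast
  obtain Y12 where Y12: "Y12 \<in> carrier_mat r m" "V12 = V * Y12" using colspan_factor[OF cV12 dimV sp12] by blast
  obtain Y2 where Y2: "Y2 \<in> carrier_mat r (m*m)" "V2 = V * Y2" using colspan_factor[OF cV2 dimV sp2] by blast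
  obtain Y31 where Y31: "Y31 \<in> carrier_mat r (m*(m*m))" "V31 = V * Y31" using colspan_factor[OF cV31 dimV sp31] by blast
  obtain Y32 where Y32: "Y32 \<in> carrier_mat r (m*m)" "V32 = V * Y32" using colspan_factor[OF cV32 dimV sp32] by blast
  have iKr1: "invertible_mat (Wh * K \<sigma>1 * V)" using invKr[OF s1] unfolding Wh_def .
  have iKr2: "invertible_mat (Wh * K \<sigma>2 * V)" using invKr[OF s2] unfolding Wh_def .
  have iKr3: "invertible_mat (Wh * K \<sigma>3 * V)" using invKr[OF s3] unfolding Wh_def .
  have kIV: "kron (1\<^sub>m m) V \<in> carrier_mat (m*n) (m*r)" using kron_carrier[of "1\<^sub>m m" V] dimV by simp
  have kIY11: "kron (1\<^sub>m m) Y11 \<in> carrier_mat (m*r) (m*m)" using kron_carrier[of "1\<^sub>m m" Y11] Y11 by simp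
  have kIY2: "kron (1\<^sub>m m) Y2 \<in> carrier_mat (m*r) (m*(m*m))" using kron_carrier[of "1\<^sub>m m" Y2] Y2 by simp
  have kVV: "kron V V \<in> carrier_mat (n*n) (r*r)" using kron_carrier[of V V] dimV by simp
  have kY: "kron Y12 Y11 \<in> carrier_mat (r*r) (m*m)" using kron_carrier[of Y12 Y11] Y11 Y12 by simp
  have pr1: "kron (1\<^sub>m m) V * kron (1\<^sub>m m) Y11 = kron (1\<^sub>m m) V11"
    using kron_mult[OF I dimV I Y11(1)] Y11 by simp
  have pr2: "kron (1\<^sub>m m) V * kron (1\<^sub>m m) Y2 = kron (1\<^sub>m m) V2"
    using kron_mult[OF I dimV I Y2(1)] Y2 by simp
  have pr3: "kron V V * kron Y12 Y11 = kron V12 V11"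
    using kron_mult[OF dimV dimV Y12(1) Y11(1)] Y11 Y12 by simp
  have eqa1: "minv (K \<sigma>1) * B \<sigma>1 * (1\<^sub>m m * 1\<^sub>m m) = V * Y11"
    using Y11 cV11 unfolding V11_def by simp
  note P1 = pat[OF dimC[OF s1] dimV Wh K1 invK[OF s1] iKr1 dimB[OF s1] I I Y11(1) eqa1]
  have h11: "minv (Wh * K \<sigma>1 * V) * (Wh * B \<sigma>1) = Y11"
    using P1(1) Wh dimB[OF s1] by simp
  have g1: "G1 C K B \<sigma>1 = G1 (redC C V) (redK K V W) (redB B W) \<sigma>1"
    using P1(2) Wh dimB[OF s1] mK1 dimC[OF s1]
    unfolding G1_def redC_def redK_def redB_def Wh_def[symmetric] by simp
  have eqa2: "minv (K \<sigma>2) * B \<sigma>2 * (1\<^sub>m m * 1\<^sub>m m) = V * Y12"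
    using Y12 cV12 unfolding V12_def by simp
  note P2 = pat[OF dimC[OF s2] dimV Wh K2 invK[OF s2] iKr2 dimB[OF s2] I I Y12(1) eqa2]
  have h12: "minv (Wh * K \<sigma>2 * V) * (Wh * B \<sigma>2) = Y12"
    using P2(1) Wh dimB[OF s2] by simp
  have g2: "G1 C K B \<sigma>2 = G1 (redC C V) (redK K V W) (redB B W) \<sigma>2"
    using P2(2) Wh dimB[OF s2] mK2 dimC[OF s2]
    unfolding G1_def redC_def redK_def redB_def Wh_def[symmetric] by simp
  have eqb: "minv (K \<sigma>2) * N \<sigma>1 * (kron (1\<^sub>m m) V * kron (1\<^sub>m m) Y11) = V * Y2"
    using Y2 unfolding pr1 V2_def by simp
  note P3 = pat[OF dimC[OF s2] dimV Wh K2 invK[OF s2] iKr2 N1 kIV kIY11 Y2(1) eqb]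
  have g3: "G2 m C K B N \<sigma>1 \<sigma>2 = G2 m (redC C V) (redK K V W) (redB B W) (redN m N V W) \<sigma>1 \<sigma>2"
    using P3(2) unfolding G2_def redC_def redK_def redB_def redN_def Wh_def[symmetric] h11 pr1
      V11_def by simp
  have h2: "minv (Wh * K \<sigma>2 * V) * (Wh * N \<sigma>1 * kron (1\<^sub>m m) V) * kron (1\<^sub>m m) Y11 = Y2"
    using P3(1) .
  have eqc: "minv (K \<sigma>3) * N \<sigma>2 * (kron (1\<^sub>m m) V * kron (1\<^sub>m m) Y2) = V * Y31"
    using Y31 unfolding pr2 V31_def by simp
  note P4 = pat[OF dimC[OF s3] dimV Wh K3 invK[OF s3] iKr3 N2 kIV kIY2 Y31(1) eqc]
  have g4: "G3N m C K B N \<sigma>1 \<sigma>2 \<sigma>3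
           = G3N m (redC C V) (redK K V W) (redB B W) (redN m N V W) \<sigma>1 \<sigma>2 \<sigma>3"
    using P4(2) unfolding G3N_def redC_def redK_def redB_def redN_def Wh_def[symmetric] h11 h2 pr2
      V2_def V11_def by simp
  have eqd: "minv (K \<sigma>3) * H \<sigma>2 \<sigma>1 * (kron V V * kron Y12 Y11) = V * Y32"
    using Y32 unfolding pr3 V32_def by simp
  note P5 = pat[OF dimC[OF s3] dimV Wh K3 invK[OF s3] iKr3 dimH kVV kY Y32(1) eqd]
  have g5: "G3H C K B H \<sigma>1 \<sigma>2 \<sigma>3
           = G3H (redC C V) (redK K V W) (redB B W) (redH H V W) \<sigma>1 \<sigma>2 \<sigma>3"
    using P5(2) unfolding G3H_def redC_def redK_def redB_def redH_def Wh_def[symmetric] h11 h12 pr3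
      V12_def V11_def by simp
  show ?thesis using g1 g2 g3 g4 g5 by blast
qed

end
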